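(* Let $\mu>0$, let $V^{*}_{\mu}$ be a fixed point of the quasi-optimal Bellman operator $\mathcal{B}_{\mu}$, and let $Q^{*}_{\mu}(s,a)=\mathbb{E}_{S'\sim\mathbf{P}(\cdot\mid s,a)}[R(S',s,a)+\gamma V^{*}_{\mu}(S')]$. Suppose that for each $s$ the supremum defining $\mathcal{B}_{\mu}V^{*}_{\mu}(s)$ is attained by the induced policy $\pi^{*}_{\mu}(\cdot\mid s)\in\Pi_{\mathbf{C}}$ of the form $$\pi^{*}_{\mu}(a\mid s)=\Big(\frac{Q^{*}_{\mu}(s,a)}{2\mu}-\frac{\int_{\mathcal{W}_s}Q^{*}_{\mu}(s,a')\,da'}{2\mu\,\sigma(\mathcal{W}_s)}+\frac{1}{\sigma(\mathcal{W}_s)}\Big)^{+},$$ where $\mathcal{W}_s$ is the support of $\pi^{*}_{\mu}(\cdot\mid s)$. Then there exist functions $\eta:\mathcal{S}\to[-\mu\mathbf{C},0]$ and $\varpi:\mathcal{S}\times\mathcal{A}\to[0,\infty)$ with $\varpi(s,a)\,\pi^{*}_{\mu}(a\mid s)=0$ for all $(s,a)$, such that for every $s\in\mathcal{S}$, $a\in\mathcal{A}$, $$\mathbb{E}_{S'\sim\mathbf{P}(\cdot\mid s,a)}\big[R(S',s,a)+\gamma V^{*}_{\mu}(S')\big]-\mu\big(2\pi^{*}_{\mu}(a\mid s)-1\big)-\eta(s)+\varpi(s,a)=V^{*}_{\mu}(s).$$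
   Context: Consider a Markov decision process with state space $\mathcal{S}$, continuous action space $\mathcal{A}\subseteq\mathbb{R}$ ($\sigma$ = Lebesgue measure), transition kernel $\mathbf{P}$, bounded reward $R(s',s,a)$, discount $\gamma\in[0,1)$. $\Pi_{\mathbf{C}}$ is the class of conditional densities $\pi(\cdot\mid s)$ on $\mathcal{A}$ with $\pi(a\mid s)\le\mathbf{C}$ for all $s,a$ (standing assumption: all policies lie in $\Pi_{\mathbf{C}}$). For bounded $V$, $Q_V(s,a)=\mathbb{E}_{S'\sim\mathbf{P}(\cdot\mid s,a)}[R(S',s,a)+\gamma V(S')]$ and $\mathcal{B}_{\mu}V(s)=\sup_{\pi\in\Pi_{\mathbf{C}}}\int_{\mathcal{A}}[Q_V(s,a)\pi(a\mid s)+\mu(\pi(a\mid s)-\pi(a\mid s)^2)]\,da$. $x^+=\max(x,0)$. *)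

theory Defs
  imports "HOL-Probability.Probability"
begin

definition Qfun :: "('s \<Rightarrow> real \<Rightarrow> 's measure) \<Rightarrow> ('s \<Rightarrow> 's \<Rightarrow> real \<Rightarrow> real) \<Rightarrow> real
    \<Rightarrow> ('s \<Rightarrow> real) \<Rightarrow> 's \<Rightarrow> real \<Rightarrow> real" where
  "Qfun P R \<gamma> V s a = (\<integral>s'. R s' s a + \<gamma> * V s' \<partial>(P s a))"

definition PiC :: "real \<Rightarrow> real set \<Rightarrow> 's set \<Rightarrow> ('s \<Rightarrow> real \<Rightarrow> real) set" where
  "PiC C A S = {\<pi>. \<forall>s\<in>S. (\<forall>a\<in>A. 0 \<le> \<pi> s a \<and> \<pi> s a \<le> C)
      \<and> set_borel_measurable lborel A (\<pi> s)
      \<and> set_integrable lborel A (\<pi> s)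
      \<and> (LINT a:A|lborel. \<pi> s a) = 1}"

definition Bobj :: "('s \<Rightarrow> real \<Rightarrow> 's measure) \<Rightarrow> ('s \<Rightarrow> 's \<Rightarrow> real \<Rightarrow> real) \<Rightarrow> real
    \<Rightarrow> real set \<Rightarrow> real \<Rightarrow> ('s \<Rightarrow> real) \<Rightarrow> ('s \<Rightarrow> real \<Rightarrow> real) \<Rightarrow> 's \<Rightarrow> real" where
  "Bobj P R \<gamma> A \<mu> V \<pi> s =
     (LINT a:A|lborel. Qfun P R \<gamma> V s a * \<pi> s a + \<mu> * (\<pi> s a - (\<pi> s a)\<^sup>2))"

definition Bmu :: "('s \<Rightarrow> real \<Rightarrow> 's measure) \<Rightarrow> ('s \<Rightarrow> 's \<Rightarrow> real \<Rightarrow> real) \<Rightarrow> real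
    \<Rightarrow> real \<Rightarrow> real set \<Rightarrow> 's set \<Rightarrow> real \<Rightarrow> ('s \<Rightarrow> real) \<Rightarrow> 's \<Rightarrow> real" where
  "Bmu P R \<gamma> C A S \<mu> V s = (SUP \<pi> \<in> PiC C A S. Bobj P R \<gamma> A \<mu> V \<pi> s)"

end

theory Submission
  imports Defs
begin

theorem theorem3:
  fixes SM :: "'s measure"
    and P :: "'s \<Rightarrow> real \<Rightarrow> 's measure"
    and R :: "'s \<Rightarrow> 's \<Rightarrow> real \<Rightarrow> real"
    and \<gamma> \<mu> C :: real
    and A :: "real set"
    and V :: "'s \<Rightarrow> real"
    and \<pi> :: "'s \<Rightarrow> real \<Rightarrow> real"
    and W :: "'s \<Rightarrow> real set"
  assumes A_meas: "A \<in> sets lborel"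
    and gamma: "0 \<le> \<gamma>" "\<gamma> < 1"
    and mu: "\<mu> > 0"
    and P_prob: "\<And>s a. prob_space (P s a)"
    and P_sets: "\<And>s a. sets (P s a) = sets SM"
    and P_kernel: "(\<lambda>(s, a). P s a) \<in> measurable (SM \<Otimes>\<^sub>M lborel) (subprob_algebra SM)"
    and R_meas: "\<And>s a. (\<lambda>s'. R s' s a) \<in> borel_measurable SM"
    and R_bdd: "\<exists>B. \<forall>s' s a. \<bar>R s' s a\<bar> \<le> B"
    and V_meas: "V \<in> borel_measurable SM"
    and V_bdd: "\<exists>B. \<forall>s\<in>space SM. \<bar>V s\<bar> \<le> B"
    and fixpoint: "\<forall>s\<in>space SM. V s = Bmu P R \<gamma> C A (space SM) \<mu> V s"
    and pi_class: "\<pi> \<in> PiC C A (space SM)"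
    and attained: "\<forall>s\<in>space SM. Bobj P R \<gamma> A \<mu> V \<pi> s = Bmu P R \<gamma> C A (space SM) \<mu> V s"
    and W_def: "\<And>s. W s = {a \<in> A. 0 < \<pi> s a}"
    and pi_form: "\<forall>s\<in>space SM. \<forall>a\<in>A. \<pi> s a =
        max 0 (Qfun P R \<gamma> V s a / (2 * \<mu>)
               - (LINT a':W s|lborel. Qfun P R \<gamma> V s a') / (2 * \<mu> * measure lborel (W s))
               + 1 / measure lborel (W s))"
  shows "\<exists>\<eta> :: 's \<Rightarrow> real. \<exists>\<omega> :: 's \<Rightarrow> real \<Rightarrow> real.
           (\<forall>s\<in>space SM. - \<mu> * C \<le> \<eta> s \<and> \<eta> s \<le> 0)
         \<and> (\<forall>s\<in>space SM. \<forall>a\<in>A. 0 \<le> \<omega> s a \<and> \<omega> s a * \<pi> s a = 0)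
         \<and> (\<forall>s\<in>space SM. \<forall>a\<in>A.
              (\<integral>s'. R s' s a + \<gamma> * V s' \<partial>(P s a)) - \<mu> * (2 * \<pi> s a - 1) - \<eta> s + \<omega> s a = V s)"
proof -
  define Q where "Q = Qfun P R \<gamma> V"
  define m where "m = (\<lambda>s. measure lborel (W s))"
  define K where "K = (\<lambda>s. LINT a':W s|lborel. Q s a')"
  define c where "c = (\<lambda>s. K s / m s - 2 * \<mu> / m s)"
  have Qe: "\<And>s a. (\<integral>s'. R s' s a + \<gamma> * V s' \<partial>(P s a)) = Q s a"
    by (simp add: Q_def Qfun_def)
  have key: "0 \<le> \<pi> s a \<and> Q s a - 2 * \<mu> * \<pi> s a \<le> c s
     \<and> (0 < \<pi> s a \<longrightarrow> Q s a - 2 * \<mu> * \<pi> s a = c s)"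
    if s: "s \<in> space SM" and a: "a \<in> A" for s a
  proof -
    have nn: "0 \<le> \<pi> s a" using pi_class s a by (auto simp: PiC_def)
    have pf: "\<pi> s a = max 0 (Q s a / (2 * \<mu>) - K s / (2 * \<mu> * m s) + 1 / m s)"
      using pi_form s a by (simp add: Q_def K_def m_def)
    have e: "2 * \<mu> * (Q s a / (2 * \<mu>) - K s / (2 * \<mu> * m s) + 1 / m s) = Q s a - c s"
      using mu by (simp add: c_def field_simps)
    show ?thesis
    proof (cases "0 < \<pi> s a")
      case True
      then have "\<pi> s a = Q s a / (2 * \<mu>) - K s / (2 * \<mu> * m s) + 1 / m s"
        using pf by (auto simp: max_def split: if_splits)
      then have "2 * \<mu> * \<pi> s a = Q s a - c s" using e by simp
      then show ?thesis using nn True by simp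
    next
      case False
      then have z: "\<pi> s a = 0" using nn by simp
      then have "Q s a / (2 * \<mu>) - K s / (2 * \<mu> * m s) + 1 / m s \<le> 0"
        using pf by (simp add: max_def split: if_splits)
      then have "2 * \<mu> * (Q s a / (2 * \<mu>) - K s / (2 * \<mu> * m s) + 1 / m s) \<le> 0"
        using mu by (simp add: mult_nonneg_nonpos)
      then show ?thesis using e z by simp
    qed
  qed
  define I2 where "I2 = (\<lambda>s. LINT a:A|lborel. (\<pi> s a)\<^sup>2)"
  have Vform: "V s = c s + \<mu> + \<mu> * I2 s \<and> 0 \<le> I2 s \<and> I2 s \<le> C"
    if s: "s \<in> space SM" for s
  proof -
    have pc: "\<forall>a\<in>A. 0 \<le> \<pi> s a \<and> \<pi> s a \<le> C" "set_borel_measurable lborel A (\<pi> s)"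
      "set_integrable lborel A (\<pi> s)" "(LINT a:A|lborel. \<pi> s a) = 1"
      using pi_class s unfolding PiC_def by auto
    have int1: "set_integrable lborel A (\<lambda>a. C * \<pi> s a)" using pc(3) by auto
    have meas2: "set_borel_measurable lborel A (\<lambda>a. (\<pi> s a)\<^sup>2)"
    proof -
      have "(\<lambda>x. (indicator A x *\<^sub>R \<pi> s x)\<^sup>2) \<in> borel_measurable lborel"
        using pc(2) unfolding set_borel_measurable_def by measurable
      moreover have "(\<lambda>x. (indicator A x *\<^sub>R \<pi> s x)\<^sup>2) = (\<lambda>x. indicator A x *\<^sub>R (\<pi> s x)\<^sup>2)"
        by (auto simp: indicator_def fun_eq_iff)
      ultimately show ?thesis unfolding set_borel_measurable_def by simp
    qed
    have le: "\<And>a. a \<in> A \<Longrightarrow> (\<pi> s a)\<^sup>2 \<le> C * \<pi> s a"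
      using pc(1) by (simp add: power2_eq_square mult_right_mono)
    have int2: "set_integrable lborel A (\<lambda>a. (\<pi> s a)\<^sup>2)"
    proof (rule set_integrable_bound[OF int1 meas2])
      show "AE x in lborel. x \<in> A \<longrightarrow> norm ((\<pi> s x)\<^sup>2) \<le> norm (C * \<pi> s x)"
        using le pc(1) by (auto intro!: AE_I2)
    qed
    have "I2 s \<le> (LINT a:A|lborel. C * \<pi> s a)"
      unfolding I2_def by (rule set_integral_mono[OF int2 int1 le])
    also have "\<dots> = C" using pc(4) by simp
    finally have I2C: "I2 s \<le> C" .
    have I2p: "0 \<le> I2 s" unfolding I2_def set_lebesgue_integral_def
      by (rule integral_nonneg_AE) (auto simp: indicator_def)
    have "V s = Bobj P R \<gamma> A \<mu> V \<pi> s" using fixpoint attained s by simp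
    also have "\<dots> = (LINT a:A|lborel. Q s a * \<pi> s a + \<mu> * (\<pi> s a - (\<pi> s a)\<^sup>2))"
      by (simp add: Bobj_def Q_def)
    also have "\<dots> = (LINT a:A|lborel. (c s + \<mu>) * \<pi> s a + \<mu> * (\<pi> s a)\<^sup>2)"
    proof (rule set_lebesgue_integral_cong[OF A_meas], intro allI impI)
      fix a assume a: "a \<in> A"
      show "Q s a * \<pi> s a + \<mu> * (\<pi> s a - (\<pi> s a)\<^sup>2) = (c s + \<mu>) * \<pi> s a + \<mu> * (\<pi> s a)\<^sup>2"
      proof (cases "0 < \<pi> s a")
        case True
        then have "Q s a = c s + 2 * \<mu> * \<pi> s a" using key[OF s a] by simp
        then show ?thesis by (simp add: algebra_simps power2_eq_square)
      next
        case False
        then have "\<pi> s a = 0" using key[OF s a] by simp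
        then show ?thesis by simp
      qed
    qed
    also have "\<dots> = (c s + \<mu>) * (LINT a:A|lborel. \<pi> s a) + \<mu> * I2 s"
      unfolding I2_def using pc(3) int2
      by (subst set_integral_add(2)) auto
    also have "\<dots> = c s + \<mu> + \<mu> * I2 s" using pc(4) by simp
    finally show ?thesis using I2C I2p by simp
  qed
  show ?thesis
  proof (intro exI[of _ "\<lambda>s. - \<mu> * I2 s"] exI[of _ "\<lambda>s a. c s - Q s a + 2 * \<mu> * \<pi> s a"] conjI ballI)
    fix s assume s: "s \<in> space SM"
    show "- \<mu> * C \<le> - \<mu> * I2 s" "- \<mu> * I2 s \<le> 0" using Vform[OF s] mu by auto
    fix a assume a: "a \<in> A"
    show "0 \<le> c s - Q s a + 2 * \<mu> * \<pi> s a" using key[OF s a] by simp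
    show "(c s - Q s a + 2 * \<mu> * \<pi> s a) * \<pi> s a = 0"
      using key[OF s a] by (cases "0 < \<pi> s a") auto
    show "(\<integral>s'. R s' s a + \<gamma> * V s' \<partial>(P s a)) - \<mu> * (2 * \<pi> s a - 1) - - \<mu> * I2 s
        + (c s - Q s a + 2 * \<mu> * \<pi> s a) = V s"
      using Vform[OF s] Qe[of s a] by (simp add: algebra_simps)
  qed
qed

end
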